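(* Let $t\ge 2$ and $w\ge 1$ be integers and $u=\lfloor(\frac{t}{2}+1)^2\rfloor$. If a $(w,v)$ set system $(\mathcal{X},\mathcal{B})$ is not a $t$-IPPS$(w,v)$, then there exist an integer $s$ with $2\le s\le u$ and an $s$-element subset $\mathcal{U}\subseteq\mathcal{B}$ such that $\big|\bigcup_{B\in\mathcal{U}}B\big|\le (s-1)w$.
   Context: A $(w,v)$ set system is a pair $(\mathcal{X},\mathcal{B})$ with $|\mathcal{X}|=v$ and $\mathcal{B}$ a family of $w$-element subsets (blocks) of $\mathcal{X}$. For a $w$-subset $T\subseteq\mathcal{X}$ let $P_t(T)=\{\mathcal{P}\subseteq\mathcal{B}: |\mathcal{P}|\le t,\ T\subseteq\bigcup_{B\in\mathcal{P}}B\}$. The set system is a $t$-IPPS$(w,v)$ if for every $w$-subset $T\subseteq\mathcal{X}$, either $P_t(T)=\emptyset$ or $\bigcap_{\mathcal{P}\in P_t(T)}\mathcal{P}\neq\emptyset$. *)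

theory Defs
  imports Complex_Main
begin

definition set_system :: "nat \<Rightarrow> nat \<Rightarrow> 'a set \<Rightarrow> 'a set set \<Rightarrow> bool" where
  "set_system w v X B \<longleftrightarrow> finite X \<and> card X = v \<and>
     (\<forall>b\<in>B. b \<subseteq> X \<and> card b = w)"

definition P_t :: "nat \<Rightarrow> 'a set set \<Rightarrow> 'a set \<Rightarrow> 'a set set set" where
  "P_t t B T = {P. P \<subseteq> B \<and> card P \<le> t \<and> T \<subseteq> \<Union>P}"

definition IPPS :: "nat \<Rightarrow> nat \<Rightarrow> nat \<Rightarrow> 'a set \<Rightarrow> 'a set set \<Rightarrow> bool" where
  "IPPS t w v X B \<longleftrightarrow> set_system w v X B \<and>
     (\<forall>T. T \<subseteq> X \<and> card T = w \<longrightarrow>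
        P_t t B T = {} \<or> \<Inter>(P_t t B T) \<noteq> {})"

end

theory Submission
  imports Defs
begin

lemma double_count:
  assumes "finite U" "finite T"
  shows "(\<Sum>b\<in>U. card (b \<inter> T)) = (\<Sum>x\<in>T. card {b\<in>U. x \<in> b})"
proof -
  have "(\<Sum>b\<in>U. card (b \<inter> T)) = (\<Sum>b\<in>U. \<Sum>x\<in>T. (if x \<in> b then 1 else 0::nat))"
    by (intro sum.cong refl) (simp add: sum.If_cases assms Int_commute)
  also have "\<dots> = (\<Sum>x\<in>T. \<Sum>b\<in>U. (if x \<in> b then 1 else 0::nat))"
    by (rule sum.swap)
  also have "\<dots> = (\<Sum>x\<in>T. card {b\<in>U. x \<in> b})"
    by (intro sum.cong refl) (simp add: sum.If_cases assms Int_def conj_commute)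
  finally show ?thesis .
qed

theorem corollary2:
  fixes t w v :: nat and X :: "'a set" and B :: "'a set set"
  assumes "t \<ge> 2" and "w \<ge> 1"
    and "set_system w v X B"
    and "\<not> IPPS t w v X B"
  shows "\<exists>s::nat. 2 \<le> s \<and> s \<le> nat (floor ((real t / 2 + 1)^2)) \<and>
           (\<exists>U. U \<subseteq> B \<and> card U = s \<and> card (\<Union>U) \<le> (s - 1) * w)"
proof -
  have fX: "finite X" and blk: "\<And>b. b \<in> B \<Longrightarrow> b \<subseteq> X \<and> card b = w"
    using assms(3) unfolding set_system_def by auto
  have fB: "finite B"
    by (rule finite_subset[of B "Pow X"]) (use blk fX in auto)
  obtain T where TX: "T \<subseteq> X" and cT: "card T = w" and emp: "\<Inter>(P_t t B T) = {}"
    using assms(3,4) unfolding IPPS_def by auto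
  have fT: "finite T" using TX fX finite_subset by blast
  have Tne: "T \<noteq> {}" using cT assms(2) by auto
  let ?PT = "P_t t B T"
  have fPT: "finite ?PT"
    by (rule finite_subset[of _ "Pow B"]) (auto simp: P_t_def fB)
  have "\<exists>F. F \<subseteq> ?PT \<and> \<Inter>F = {}" using emp by blast
  then obtain F where FPT: "F \<subseteq> ?PT" and Femp: "\<Inter>F = {}"
    and Fmin: "\<And>G. G \<subseteq> ?PT \<Longrightarrow> \<Inter>G = {} \<Longrightarrow> card F \<le> card G"
    using ex_has_least_nat[of "\<lambda>F. F \<subseteq> ?PT \<and> \<Inter>F = {}" _ card] by metis
  have fF: "finite F" using FPT fPT finite_subset by blast
  have Fne: "F \<noteq> {}" using Femp by auto
  have Pprop: "\<And>P. P \<in> F \<Longrightarrow> P \<subseteq> B \<and> card P \<le> t \<and> T \<subseteq> \<Union>P"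
    using FPT by (auto simp: P_t_def)
  define m where "m = card F"
  define bb where "bb P = (SOME b. b \<in> \<Inter>(F - {P}))" for P
  have bbin: "bb P \<in> \<Inter>(F - {P})" if "P \<in> F" for P
  proof -
    have "card (F - {P}) < card F" using that fF by (meson card_Diff1_less)
    hence "\<Inter>(F - {P}) \<noteq> {}" using Fmin[of "F - {P}"] FPT by force
    then show ?thesis unfolding bb_def by (metis ex_in_conv someI_ex)
  qed
  have bbnot: "bb P \<notin> P" if "P \<in> F" for P
  proof
    assume "bb P \<in> P"
    hence "bb P \<in> \<Inter>F" using bbin[OF that] by blast
    thus False using Femp by blast
  qed
  have bbinj: "inj_on bb F"
  proof (rule inj_onI)
    fix P Q assume PQ: "P \<in> F" "Q \<in> F" "bb P = bb Q"
    show "P = Q"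
    proof (rule ccontr)
      assume "P \<noteq> Q"
      hence "bb Q \<in> P" using bbin[OF PQ(2)] PQ(1) by blast
      thus False using bbnot[OF PQ(1)] PQ(3) by simp
    qed
  qed
  define D where "D = bb ` F"
  have cD: "card D = m" unfolding D_def m_def using card_image[OF bbinj] .
  have fD: "finite D" unfolding D_def using fF by simp
  have Dsub: "D - {bb P} \<subseteq> P" if "P \<in> F" for P
    unfolding D_def using bbin that by blast
  have cDP: "card (D - {bb P}) = m - 1" if "P \<in> F" for P
    using cD that fD by (simp add: D_def)
  have m1t: "m - 1 \<le> t"
  proof -
    obtain P where "P \<in> F" using Fne by blast
    have "card (D - {bb P}) \<le> card P"
      by (rule card_mono) (use Pprop[OF \<open>P \<in> F\<close>] fB finite_subset Dsub[OF \<open>P \<in> F\<close>] in auto)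
    thus ?thesis using cDP[OF \<open>P \<in> F\<close>] Pprop[OF \<open>P \<in> F\<close>] by linarith
  qed
  have m1: "m \<ge> 1" using Fne fF m_def by (simp add: Suc_leI card_gt_0_iff)
  define U where "U = \<Union>F"
  have UB: "U \<subseteq> B" unfolding U_def using Pprop by blast
  have fU: "finite U" using UB fB finite_subset by blast
  have cPD: "card (P - D) \<le> t - (m - 1)" if "P \<in> F" for P
  proof -
    have fP: "finite P" using Pprop[OF that] fB finite_subset by blast
    have "P - D \<subseteq> P - (D - {bb P})" by blast
    hence "card (P - D) \<le> card (P - (D - {bb P}))" by (rule card_mono[OF finite_Diff[OF fP]])
    also have "\<dots> = card P - (m - 1)"
      using card_Diff_subset[OF finite_subset[OF Dsub[OF that] fP] Dsub[OF that]] cDP[OF that]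
      by simp
    finally show ?thesis using Pprop[OF that] by linarith
  qed
  have Usub: "U \<subseteq> D \<union> (\<Union>P\<in>F. P - D)" unfolding U_def by blast
  have "card U \<le> card (D \<union> (\<Union>P\<in>F. P - D))"
  proof (rule card_mono[OF _ Usub])
    have "finite (P - D)" if PF: "P \<in> F" for P
      using Pprop[OF PF] fB by (meson finite_Diff finite_subset)
    hence "finite (\<Union>P\<in>F. P - D)" using fF by (intro finite_UN_I)
    thus "finite (D \<union> (\<Union>P\<in>F. P - D))" using fD by simp
  qed
  also have "\<dots> \<le> card D + card (\<Union>P\<in>F. P - D)" by (rule card_Un_le)
  also have "card (\<Union>P\<in>F. P - D) \<le> (\<Sum>P\<in>F. card (P - D))" by (rule card_UN_le[OF fF])
  also have "\<dots> \<le> (\<Sum>P\<in>F. t - (m - 1))" by (rule sum_mono) (use cPD in auto)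
  also have "\<dots> = m * (t - (m - 1))" using m_def by simp
  finally have sU: "card U \<le> m + m * (t - (m - 1))" using cD by linarith
  have two: "\<exists>b1 b2. b1 \<in> U \<and> b2 \<in> U \<and> b1 \<noteq> b2 \<and> x \<in> b1 \<and> x \<in> b2" if xT: "x \<in> T" for x
  proof -
    obtain P where P: "P \<in> F" using Fne by blast
    obtain b1 where b1: "b1 \<in> P" "x \<in> b1" using Pprop[OF P] xT by blast
    have "b1 \<notin> \<Inter>F" using Femp by blast
    then obtain Q where Q: "Q \<in> F" "b1 \<notin> Q" by blast
    obtain b2 where b2: "b2 \<in> Q" "x \<in> b2" using Pprop[OF Q(1)] xT by blast
    show ?thesis
      by (rule exI[of _ b1], rule exI[of _ b2]) (use b1 b2 P Q U_def in auto)
  qed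
  have deg: "card {b\<in>U. x \<in> b} \<ge> 2" if xT: "x \<in> T" for x
  proof -
    obtain b1 b2 where "b1 \<in> U" "b2 \<in> U" "b1 \<noteq> b2" "x \<in> b1" "x \<in> b2"
      using two[OF xT] by blast
    hence "{b1, b2} \<subseteq> {b\<in>U. x \<in> b}" by blast
    hence "card {b1, b2} \<le> card {b\<in>U. x \<in> b}" by (rule card_mono[rotated]) (use fU in simp)
    thus ?thesis using \<open>b1 \<noteq> b2\<close> by simp
  qed
  have s2: "card U \<ge> 2"
  proof -
    obtain x where "x \<in> T" using Tne by blast
    have "card {b\<in>U. x \<in> b} \<le> card U" by (rule card_mono[OF fU]) blast
    thus ?thesis using deg[OF \<open>x \<in> T\<close>] by linarith
  qed
  have sumge: "(\<Sum>b\<in>U. card (b \<inter> T)) \<ge> 2 * w"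
  proof -
    have "(\<Sum>x\<in>T. (2::nat)) \<le> (\<Sum>x\<in>T. card {b\<in>U. x \<in> b})" by (rule sum_mono) (use deg in auto)
    thus ?thesis using double_count[OF fU fT] cT by simp
  qed
  have split: "card (b - T) + card (b \<inter> T) = w" if "b \<in> U" for b
  proof -
    have "b \<in> B" using that UB by blast
    hence "finite b" "card b = w" using blk fX finite_subset by blast+
    thus ?thesis using card_Int_Diff[of b T] by simp
  qed
  have sumw: "(\<Sum>b\<in>U. card (b - T)) + (\<Sum>b\<in>U. card (b \<inter> T)) = card U * w"
    using split by (simp add: sum.distrib[symmetric])
  have "\<Union>U \<subseteq> T \<union> (\<Union>b\<in>U. b - T)" by blast
  hence "card (\<Union>U) \<le> card (T \<union> (\<Union>b\<in>U. b - T))"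
  proof (rule card_mono[rotated])
    have "finite (b - T)" if bU: "b \<in> U" for b
    proof -
      have "b \<subseteq> X" using blk UB bU by blast
      thus ?thesis using fX by (meson finite_Diff finite_subset)
    qed
    hence "finite (\<Union>b\<in>U. b - T)" using fU by (intro finite_UN_I)
    thus "finite (T \<union> (\<Union>b\<in>U. b - T))" using fT by simp
  qed
  also have "\<dots> \<le> card T + card (\<Union>b\<in>U. b - T)" by (rule card_Un_le)
  also have "card (\<Union>b\<in>U. b - T) \<le> (\<Sum>b\<in>U. card (b - T))" by (rule card_UN_le[OF fU])
  finally have cu: "card (\<Union>U) \<le> w + (\<Sum>b\<in>U. card (b - T))" using cT by linarith
  have cu2: "card (\<Union>U) \<le> (card U - 1) * w"
  proof -
    have "card U = Suc (card U - 1)" using s2 by simp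
    hence "card U * w = (card U - 1) * w + w" by (metis add.commute mult_Suc)
    thus ?thesis using cu sumw sumge by linarith
  qed
  have bound: "real (card U) \<le> (real t / 2 + 1)^2"
  proof -
    have "real (card U) \<le> real m + real m * (real t - (real m - 1))"
    proof -
      have e: "t - (m - 1) = (t + 1) - m" using m1 by simp
      have "m \<le> t + 1" using m1 m1t by linarith
      hence "real ((t + 1) - m) = real t - (real m - 1)" by (simp add: of_nat_diff)
      hence "real (m + m * (t - (m - 1))) = real m + real m * (real t - (real m - 1))"
        using e by simp
      thus ?thesis using sU by (metis of_nat_le_iff)
    qed
    also have "\<dots> = (real t / 2 + 1)^2 - (real t + 2 - 2 * real m)^2 / 4"
      by (simp add: power2_eq_square field_simps)
    also have "\<dots> \<le> (real t / 2 + 1)^2" by simp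
    finally show ?thesis .
  qed
  have "card U \<le> nat (floor ((real t / 2 + 1)^2))"
  proof -
    have "int (card U) \<le> floor ((real t / 2 + 1)^2)" using bound by (simp add: le_floor_iff)
    thus ?thesis by linarith
  qed
  thus ?thesis using s2 UB cu2 by blast
qed

end
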